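(* For every integer $n\ge1$ and every $\lambda<0$, $$G_{n,n+1}(\lambda):=\frac{\frac{d}{d\lambda}h^{(1)}_{n+1}(-i\lambda)}{h^{(1)}_{n+1}(-i\lambda)}-\frac{\frac{d}{d\lambda}h^{(1)}_{n}(-i\lambda)}{h^{(1)}_{n}(-i\lambda)}>0.$$
   Context: For $n\ge0$ let $R_n(w)=\sum_{m=0}^n\frac{(n+m)!}{m!\,(n-m)!}w^m$. The spherical Hankel function of the first kind satisfies, for real $\lambda<0$, $h^{(1)}_n(-i\lambda)=(-i)^n\frac{e^{\lambda}}{\lambda}R_n\!\left(-\frac{1}{2\lambda}\right)$ (up to an $n$-independent normalizing constant, which does not affect the logarithmic derivatives); $\frac{d}{d\lambda}h^{(1)}_n(-i\lambda)$ denotes the derivative of the function $\lambda\mapsto h^{(1)}_n(-i\lambda)$. *)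

theory Defs
  imports "HOL-Analysis.Analysis"
begin

definition R :: "nat \<Rightarrow> real \<Rightarrow> real" where
  "R n w = (\<Sum>m = 0..n. (fact (n + m) / (fact m * fact (n - m))) * w ^ m)"

text \<open>The function lam |-> h^(1)_n(-i lam) for real lam < 0, given by the closed form
  (-i)^n e^lam / lam * R_n(-1/(2 lam)) (normalizing constant dropped).\<close>
definition hankel1_neg_i :: "nat \<Rightarrow> real \<Rightarrow> complex" where
  "hankel1_neg_i n lam = (- \<i>) ^ n * complex_of_real (exp lam / lam * R n (- 1 / (2 * lam)))"

definition G :: "nat \<Rightarrow> real \<Rightarrow> complex" where
  "G n lam =
     vector_derivative (hankel1_neg_i (n + 1)) (at lam) / hankel1_neg_i (n + 1) lam
   - vector_derivative (hankel1_neg_i n) (at lam) / hankel1_neg_i n lam"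

end

theory Submission
  imports Defs
begin

definition ac :: "nat \<Rightarrow> nat \<Rightarrow> real" where
  "ac n m = fact (n + m) / (fact m * fact (n - m))"

lemma ac_mid_alg:
  fixes F K J k j :: real
  assumes "K > 0" "J > 0" "k \<ge> 0" "j \<ge> 0"
  shows "(2*k+j+4)*(2*k+j+3)*F/(((k+1)*K)*((j+2)*(j+1)*J)) = 2*(2*(k+1+j)+3) * (F/(K*((j+2)*(j+1)*J))) + F/(((k+1)*K)*J)"
proof -
  have "k+1 \<noteq> 0" "j+1\<noteq>0" "j+2\<noteq>0" using assms by auto
  then show ?thesis using assms by (simp add: divide_simps) (simp add: algebra_simps)
qed

lemma ac_mid:
  assumes "Suc k \<le> n"
  shows "ac (n+2) (Suc k) = 2 * (2 * real n + 3) * ac (n+1) k + ac n (Suc k)"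
proof -
  define j where "j = n - Suc k"
  have n: "n = k + 1 + j" using assms by (simp add: j_def)
  have e1: "n + 2 + Suc k = Suc (Suc (2*k+j+2))" "n + 1 + k = 2*k+j+2" "n + Suc k = 2*k+j+2"
    "n + 2 - Suc k = Suc (Suc j)" "n + 1 - k = Suc (Suc j)" "n - Suc k = j" using n by auto
  have f: "fact (Suc (Suc (2*k+j+2))) = (2*real k+real j+4)*(2*real k+real j+3)*fact (2*k+j+2)"
    "fact (Suc (Suc j)) = (real j+2)*(real j+1)*fact j"
    "fact (Suc k) = (real k + 1) * fact k" by (simp_all add: fact_Suc algebra_simps)
  have p: "(fact k::real) > 0" "(fact j::real) > 0" by auto
  have rn: "real n = real k + 1 + real j" using n by simp
  show ?thesis unfolding ac_def e1 f rn
    by (rule ac_mid_alg[OF p]) simp_all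
qed

lemma ac_top1:
  "ac (n+2) (Suc n) = 2 * (2 * real n + 3) * ac (n+1) n"
proof -
  have e1: "n + 2 + Suc n = Suc (Suc (2*n+1))" "n + 1 + n = 2*n+1" 
    "n + 2 - Suc n = Suc 0" "n + 1 - n = Suc 0" by auto
  have f: "fact (Suc (Suc (2*n+1))) = (2*real n+3)*(2*real n+2)*fact (2*n+1)"
    "fact (Suc n) = (real n + 1) * fact n" by (simp_all add: fact_Suc algebra_simps)
  have p: "(fact n::real) > 0" "(fact (2*n+1)::real) > 0" by auto
  show ?thesis unfolding ac_def e1 f using p
    by (simp add: divide_simps) (simp add: algebra_simps)
qed

lemma ac_top2:
  "ac (n+2) (Suc (Suc n)) = 2 * (2 * real n + 3) * ac (n+1) (Suc n)"
proof -
  have e1: "n + 2 + Suc (Suc n) = Suc (Suc (2*n+2))" "n + 1 + Suc n = 2*n+2" 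
    "n + 2 - Suc (Suc n) = 0" "n + 1 - Suc n = 0" by auto
  have f: "fact (Suc (Suc (2*n+2))) = (2*real n+4)*(2*real n+3)*fact (2*n+2)"
    "fact (Suc (Suc n)) = (real n + 2) * fact (Suc n)" by (simp_all add: fact_Suc algebra_simps)
  have p: "(fact (Suc n)::real) > 0" "(fact (2*n+2)::real) > 0" by auto
  show ?thesis unfolding ac_def e1 f using p
    by (simp add: divide_simps) (simp add: algebra_simps)
qed

lemma R_alt: "R n w = (\<Sum>m<Suc n. ac n m * w ^ m)"
  unfolding R_def ac_def atLeast0AtMost lessThan_Suc_atMost ..

lemma ac0 [simp]: "ac n 0 = 1"
  by (simp add: ac_def)

lemma ac_nonneg: "ac n m \<ge> 0"
  by (simp add: ac_def)

lemma R_shift: "R n w = 1 + (\<Sum>k<n. ac n (Suc k) * w ^ Suc k)"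
  unfolding R_alt by (subst sum.lessThan_Suc_shift) (simp del: sum.lessThan_Suc)

lemma ac_rec:
  assumes "k < n + 2"
  shows "ac (Suc (Suc n)) (Suc k) = 2 * (2 * real n + 3) * ac (Suc n) k + (if k < n then ac n (Suc k) else 0)"
proof -
  consider "Suc k \<le> n" | "k = n" | "k = Suc n" using assms by linarith
  then show ?thesis
  proof cases
    case 1 then show ?thesis using ac_mid[of k n] by simp
  next
    case 2 then show ?thesis using ac_top1[of n] by simp
  next
    case 3 then show ?thesis using ac_top2[of n] by simp
  qed
qed

lemma R_rec: "R (Suc (Suc n)) w = 2 * (2 * real n + 3) * w * R (Suc n) w + R n w"
proof -
  have "R (Suc (Suc n)) w = 1 + (\<Sum>k<n+2. ac (Suc (Suc n)) (Suc k) * w ^ Suc k)"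
    by (subst R_shift) simp
  also have "(\<Sum>k<n+2. ac (Suc (Suc n)) (Suc k) * w ^ Suc k)
     = (\<Sum>k<n+2. 2 * (2 * real n + 3) * w * (ac (Suc n) k * w ^ k) + (if k < n then ac n (Suc k) * w ^ Suc k else 0))"
    by (rule sum.cong) (auto simp: ac_rec algebra_simps)
  also have "\<dots> = 2 * (2 * real n + 3) * w * (\<Sum>k<n+2. ac (Suc n) k * w ^ k) + (\<Sum>k<n+2. (if k < n then ac n (Suc k) * w ^ Suc k else 0))"
    by (simp add: sum.distrib sum_distrib_left del: sum.lessThan_Suc)
  also have "(\<Sum>k<n+2. (if k < n then ac n (Suc k) * w ^ Suc k else 0)) = (\<Sum>k<n. ac n (Suc k) * w ^ Suc k)"
    by (simp add: numeral_2_eq_2)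
  also have "(\<Sum>k<n+2. ac (Suc n) k * w ^ k) = R (Suc n) w"
    by (simp add: R_alt numeral_2_eq_2)
  finally show ?thesis by (simp add: R_shift[of n])
qed

definition Rd :: "nat \<Rightarrow> real \<Rightarrow> real" where
  "Rd n w = (\<Sum>m<Suc n. ac n m * (real m * w ^ (m - 1)))"

lemma R_deriv: "(R n has_real_derivative Rd n w) (at w)"
proof -
  have "R n = (\<lambda>w. \<Sum>m<Suc n. ac n m * w ^ m)" by (simp add: R_alt fun_eq_iff del: sum.lessThan_Suc)
  then show ?thesis unfolding Rd_def
    by (auto intro!: derivative_eq_intros simp: mult_ac simp del: sum.lessThan_Suc)
qed

lemma R_deriv_chain [derivative_intros]:
  "(g has_real_derivative g') (at x) \<Longrightarrow> ((\<lambda>x. R n (g x)) has_real_derivative Rd n (g x) * g') (at x)"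
  by (rule DERIV_chain2[OF R_deriv])

lemma Rd_rec: "Rd (Suc (Suc n)) w = 2 * (2 * real n + 3) * (R (Suc n) w + w * Rd (Suc n) w) + Rd n w"
proof -
  have e: "R (Suc (Suc n)) = (\<lambda>w. 2 * (2 * real n + 3) * w * R (Suc n) w + R n w)"
    by (simp add: R_rec fun_eq_iff)
  have "(R (Suc (Suc n)) has_real_derivative 2 * (2 * real n + 3) * (R (Suc n) w + w * Rd (Suc n) w) + Rd n w) (at w)"
    unfolding e by (auto intro!: derivative_eq_intros R_deriv simp: algebra_simps)
  then show ?thesis using R_deriv DERIV_unique by blast
qed

definition W :: "nat \<Rightarrow> real \<Rightarrow> real" where
  "W n w = Rd (Suc n) w * R n w - Rd n w * R (Suc n) w"

lemma W_rec: "W (Suc n) w = 2 * (2 * real n + 3) * (R (Suc n) w)^2 - W n w"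
  unfolding W_def Rd_rec R_rec by (simp add: algebra_simps power2_eq_square)

lemma R_ge1: "w \<ge> 0 \<Longrightarrow> R n w \<ge> 1"
  unfolding R_shift by (auto intro!: sum_nonneg mult_nonneg_nonneg ac_nonneg)

lemma ac_mono: assumes "m \<le> n" shows "ac n m \<le> ac (Suc n) m"
proof -
  have e: "Suc n + m = Suc (n + m)" "Suc n - m = Suc (n - m)" using assms by auto
  have p: "(fact (n+m)::real) > 0" "(fact m::real) > 0" "(fact (n-m)::real) > 0" by auto
  have "real (n - m) + 1 \<le> real (n + m) + 1" by simp
  then show ?thesis unfolding ac_def e fact_Suc using p
    by (simp add: divide_simps mult_left_mono mult_right_mono)
qed

lemma R_mono: assumes "w \<ge> 0" shows "R n w \<le> R (Suc n) w"
proof -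
  have "R n w \<le> (\<Sum>m<Suc n. ac (Suc n) m * w ^ m)"
    unfolding R_alt by (rule sum_mono) (auto intro!: mult_right_mono ac_mono simp: assms)
  also have "\<dots> \<le> R (Suc n) w"
    unfolding R_alt[of "Suc n"] using assms by (simp add: ac_nonneg)
  finally show ?thesis .
qed

lemma W0: "W 0 w = 2"
  by (simp add: W_def Rd_def R_alt ac_def)

lemma W_pos: assumes "w \<ge> 0" shows "W n w > 0 \<and> W (Suc n) w > 0"
proof (induction n)
  case 0
  have "R 1 w \<ge> 1" using R_ge1 assms by blast
  then have "(R 1 w)^2 \<ge> 1" by (simp add: one_le_power)
  then show ?case using W_rec[of 0 w] W0 by simp
next
  case (Suc n)
  have a: "R (Suc n) w \<le> R (Suc (Suc n)) w" using R_mono assms by blast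
  have b: "R (Suc n) w \<ge> 1" using R_ge1 assms by blast
  have c: "(R (Suc n) w)^2 \<le> (R (Suc (Suc n)) w)^2" using a b by (intro power_mono) auto
  have "W (Suc (Suc n)) w = 2 * (2 * real (Suc n) + 3) * (R (Suc (Suc n)) w)^2 - 2 * (2 * real n + 3) * (R (Suc n) w)^2 + W n w"
    using W_rec[of "Suc n" w] W_rec[of n w] by simp
  moreover have "2 * (2 * real n + 3) * (R (Suc n) w)^2 \<le> 2 * (2 * real (Suc n) + 3) * (R (Suc (Suc n)) w)^2"
    using c by (intro mult_mono) auto
  ultimately show ?case using Suc by simp
qed

definition fr :: "nat \<Rightarrow> real \<Rightarrow> real" where
  "fr n x = exp x / x * R n (- 1 / (2 * x))"

definition Dfr :: "nat \<Rightarrow> real \<Rightarrow> real" where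
  "Dfr n lam = (exp lam / lam - exp lam / lam^2) * R n (- 1 / (2 * lam))
     + (Rd n (- 1 / (2 * lam)) * (1 / (2 * lam^2))) * (exp lam / lam)"

lemma hank_eq: "hankel1_neg_i n = (\<lambda>x. (- \<i>) ^ n * complex_of_real (fr n x))"
  by (simp add: fun_eq_iff hankel1_neg_i_def fr_def)

lemma fr_deriv:
  assumes "lam \<noteq> 0"
  shows "(fr n has_real_derivative Dfr n lam) (at lam)"
proof -
  have d1: "((\<lambda>x. exp x / x) has_real_derivative (exp lam / lam - exp lam / lam^2)) (at lam)"
    using assms by (auto intro!: derivative_eq_intros simp: field_simps power2_eq_square)
  have d2: "((\<lambda>x. - 1 / (2 * x)) has_real_derivative 1 / (2 * lam^2)) (at lam)"
    using assms by (auto intro!: derivative_eq_intros simp: field_simps power2_eq_square)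
  note d3 = R_deriv_chain[OF d2, of n]
  have "fr n = (\<lambda>x. exp x / x * R n (- 1 / (2 * x)))" by (simp add: fun_eq_iff fr_def)
  then show ?thesis unfolding Dfr_def using DERIV_mult[OF d1 d3] by simp
qed

lemma hank_vderiv:
  assumes "lam \<noteq> 0"
  shows "vector_derivative (hankel1_neg_i n) (at lam) = (- \<i>) ^ n * complex_of_real (Dfr n lam)"
proof -
  have "(hankel1_neg_i n has_vector_derivative (- \<i>) ^ n * complex_of_real (Dfr n lam)) (at lam)"
    unfolding hank_eq
    by (intro has_vector_derivative_mult_right has_vector_derivative_of_real fr_deriv assms)
  then show ?thesis by (rule vector_derivative_at)
qed

lemma logd:
  assumes "lam < 0"
  shows "Dfr k lam / fr k lam = (exp lam / lam - exp lam / lam^2) / (exp lam / lam)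
           + Rd k (- 1 / (2 * lam)) * (1 / (2 * lam^2)) / R k (- 1 / (2 * lam))"
proof -
  have w: "- 1 / (2 * lam) \<ge> 0" using assms by (simp add: divide_simps)
  have "R k (- 1 / (2 * lam)) \<ge> 1" using R_ge1[OF w] .
  then have r: "R k (- 1 / (2 * lam)) \<noteq> 0" by linarith
  have g: "exp lam / lam \<noteq> 0" using assms by simp
  show ?thesis unfolding Dfr_def fr_def using r g by (simp add: divide_simps)
qed

theorem proposition3p1:
  fixes n :: nat and lam :: real
  assumes "n \<ge> 1" and "lam < 0"
  shows "G n lam \<in> \<real> \<and> Re (G n lam) > 0"
proof -
  define w where "w = - 1 / (2 * lam)"
  have w0: "w \<ge> 0" using assms by (simp add: w_def divide_simps)
  have l0: "lam \<noteq> 0" using assms by simp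
  have eq: "G n lam = complex_of_real (Dfr (Suc n) lam / fr (Suc n) lam - Dfr n lam / fr n lam)"
  proof -
    have c: "\<And>k. (- \<i>) ^ k \<noteq> 0" by simp
    have h: "\<And>k. hankel1_neg_i k lam = (- \<i>) ^ k * complex_of_real (fr k lam)" by (simp add: hank_eq)
    show ?thesis unfolding G_def hank_vderiv[OF l0] h Suc_eq_plus1[symmetric]
      mult_divide_mult_cancel_left[OF c] of_real_divide[symmetric] of_real_diff ..
  qed
  have r1: "R n w \<ge> 1" "R (Suc n) w \<ge> 1" using R_ge1[OF w0] by auto
  have Wp: "W n w > 0" using W_pos[OF w0] by blast
  have "Dfr (Suc n) lam / fr (Suc n) lam - Dfr n lam / fr n lam
        = (1 / (2 * lam^2)) * (W n w / (R n w * R (Suc n) w))"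
    unfolding logd[OF assms(2)] w_def[symmetric] W_def using r1
    by (simp add: divide_simps) (simp add: algebra_simps)
  moreover have "(1 / (2 * lam^2)) * (W n w / (R n w * R (Suc n) w)) > 0"
    using Wp r1 l0 by (intro mult_pos_pos divide_pos_pos) auto
  ultimately show ?thesis unfolding eq by simp
qed

end
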